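(* Let $n\ge1$ and let $\{\mathcal{I},\mathcal{J}\}=\{\mathcal{N},\mathcal{M}\}$. If $\mathrm{cov}_t(\mathcal{I})\ge\mathrm{cof}(\mathcal{I})$, then there exists a linear subspace $H$ of $\mathbb{R}^n$, considered as a vector space over $\mathbb{Q}$, such that $H\in\mathcal{J}\setminus\mathcal{I}$.
   Context: $\mathcal{N}$ is the $\sigma$-ideal of Lebesgue null subsets of $\mathbb{R}^n$, and $\mathcal{M}$ is the $\sigma$-ideal of meager subsets of $\mathbb{R}^n$. For $A,B\subseteq\mathbb{R}^n$ put $A+B=\{a+b:a\in A,b\in B\}$. $\mathrm{cof}(\mathcal{I})=\min\{|\mathcal{F}|:\mathcal{F}\subseteq\mathcal{I},\ \forall A\in\mathcal{I}\ \exists B\in\mathcal{F}\ A\subseteq B\}$. $\mathrm{cov}_t(\mathcal{I})=\min\{|A|:A\subseteq\mathbb{R}^n,\ \exists B\in\mathcal{I}\ (A+B=\mathbb{R}^n)\}$ (the transitive covering number). *)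

theory Defs
  imports "HOL-Analysis.Analysis"
begin

definition msum :: "'a::plus set \<Rightarrow> 'a set \<Rightarrow> 'a set" where
  "msum A B = {a + b | a b. a \<in> A \<and> b \<in> B}"

definition null_ideal :: "('a::euclidean_space) set set" where
  "null_ideal = null_sets lebesgue"

definition nowhere_dense :: "'a::topological_space set \<Rightarrow> bool" where
  "nowhere_dense S \<longleftrightarrow> interior (closure S) = {}"

definition meager :: "'a::topological_space set \<Rightarrow> bool" where
  "meager A \<longleftrightarrow> (\<exists>F. countable F \<and> (\<forall>S\<in>F. nowhere_dense S) \<and> A \<subseteq> \<Union>F)"

definition meager_ideal :: "('a::euclidean_space) set set" where
  "meager_ideal = {A. meager A}"

(* F witnesses cof(I): F \<subseteq> I and every member of I is covered by a member of F *)
definition cofinal_family :: "'a set set \<Rightarrow> 'a set set \<Rightarrow> bool" where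
  "cofinal_family I F \<longleftrightarrow> F \<subseteq> I \<and> (\<forall>A\<in>I. \<exists>B\<in>F. A \<subseteq> B)"

(* A witnesses cov_t(I): A + B = whole space for some B in I *)
definition transitive_cover :: "'a::plus set set \<Rightarrow> 'a set \<Rightarrow> bool" where
  "transitive_cover I A \<longleftrightarrow> (\<exists>B\<in>I. msum A B = UNIV)"

(* cov_t(I) \<ge> cof(I).  Since cardinals are well-ordered, this holds iff every witness A
   for cov_t(I) has |A| \<ge> cof(I), i.e. iff for every such A there is a cofinal family F
   with |F| \<le> |A|. *)
definition cof_le_cov_t :: "'a::plus set set \<Rightarrow> bool" where
  "cof_le_cov_t I \<longleftrightarrow>
     (\<forall>A. transitive_cover I A \<longrightarrow> (\<exists>F. cofinal_family I F \<and> (card_of F, card_of A) \<in> ordLeq))"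

definition rat_subspace :: "'a::real_vector set \<Rightarrow> bool" where
  "rat_subspace H \<longleftrightarrow> 0 \<in> H \<and> (\<forall>x\<in>H. \<forall>y\<in>H. x + y \<in> H)
      \<and> (\<forall>q\<in>\<rat>. \<forall>x\<in>H. q *\<^sub>R x \<in> H)"

end

theory Submission
  imports Defs
begin
unbundle cardinal_syntax

definition qs :: "rat \<Rightarrow> 'a::real_vector \<Rightarrow> 'a" where "qs q x = real_of_rat q *\<^sub>R x"

interpretation Q: vector_space "qs :: rat \<Rightarrow> 'a::real_vector \<Rightarrow> 'a"
  by unfold_locales (auto simp: qs_def scaleR_add_right scaleR_add_left of_rat_add of_rat_mult)

fun GS :: "'a::real_vector set \<Rightarrow> nat \<Rightarrow> 'a set" where
  "GS X 0 = {0}"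
| "GS X (Suc k) = (\<Union>x\<in>X. \<Union>q\<in>(UNIV::rat set). (\<lambda>h. qs q x + h) ` GS X k)"

lemma span_sub_GS: "v \<in> Q.span X \<Longrightarrow> v \<in> (\<Union>k. GS X k)"
proof (induction rule: Q.span_induct_alt)
  case base then show ?case by (auto intro: exI[of _ 0])
next
  case (step c x y)
  then obtain k where "y \<in> GS X k" by auto
  then have "qs c x + y \<in> GS X (Suc k)" using step by auto
  then show ?case by blast
qed

lemma countable_ordLeq_inf: "countable A \<Longrightarrow> \<not> finite B \<Longrightarrow> |A| \<le>o |B|"
proof -
  assume "countable A" "\<not> finite B"
  then obtain f :: "_ \<Rightarrow> nat" where "inj_on f A" by (auto simp: countable_def)
  then have "|A| \<le>o |UNIV::nat set|" using card_of_ordLeq by blast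
  then show ?thesis using infinite_iff_card_of_nat \<open>\<not> finite B\<close> ordLeq_transitive by blast
qed

lemma card_GS:
  assumes inf: "\<not> finite B" and X: "|X| \<le>o |B|"
  shows "|GS X k| \<le>o |B|"
proof (induction k)
  case 0
  then show ?case using inf countable_ordLeq_inf[of "{0}"] by simp
next
  case (Suc k)
  have rat: "|UNIV::rat set| \<le>o |B|"
    by (rule countable_ordLeq_inf[OF _ inf]) (rule countableI_type)
  have each: "|\<Union>q\<in>(UNIV::rat set). (\<lambda>h. qs q x + h) ` GS X k| \<le>o |B|" for x
    by (rule card_of_UNION_ordLeq_infinite[OF inf rat]) (simp add: ordLeq_transitive[OF card_of_image Suc.IH])
  show ?case
    unfolding GS.simps by (rule card_of_UNION_ordLeq_infinite[OF inf X]) (simp add: each)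
qed

lemma card_span:
  assumes inf: "\<not> finite B" and X: "|X| \<le>o |B|"
  shows "|Q.span X| \<le>o |B|"
proof -
  have "|\<Union>k. GS X k| \<le>o |B|"
    using card_of_UNION_ordLeq_infinite[OF inf countable_ordLeq_inf[OF _ inf], of UNIV "GS X"] card_GS[OF inf X] by simp
  moreover have "Q.span X \<subseteq> (\<Union>k. GS X k)" using span_sub_GS by blast
  ultimately show ?thesis using card_of_mono1 ordLeq_transitive by blast
qed


lemma span_fin: "v \<in> Q.span X \<Longrightarrow> \<exists>T. finite T \<and> T \<subseteq> X \<and> v \<in> Q.span T"
proof (induction rule: Q.span_induct_alt)
  case base then show ?case using Q.span_zero by blast
next
  case (step c x y)
  then obtain T where T: "finite T" "T \<subseteq> X" "y \<in> Q.span T" by blast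
  have "y \<in> Q.span (insert x T)" using Q.span_mono[of T "insert x T"] T by auto
  then have "qs c x + y \<in> Q.span (insert x T)"
    by (metis Q.span_add Q.span_scale Q.span_base insertI1)
  then show ?case using T step by (intro exI[of _ "insert x T"]) auto
qed

lemma abstract:
  fixes I J :: "'a::real_vector set set" and Z :: "'a set"
  assumes un: "\<And>A B. A \<in> I \<Longrightarrow> B \<in> I \<Longrightarrow> A \<union> B \<in> I"
   and ctbl: "\<And>F. countable F \<Longrightarrow> \<not> cofinal_family I F"
   and ZI: "Z \<in> I"
   and Zs: "\<And>q z. q \<noteq> 0 \<Longrightarrow> z \<in> Z \<Longrightarrow> qs q z \<in> Z"
   and HJ: "\<And>H. H \<inter> Z \<subseteq> {0} \<Longrightarrow> H \<in> J"
   and cc: "cof_le_cov_t I"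
  shows "\<exists>H. rat_subspace H \<and> H \<in> J \<and> H \<notin> I"
proof -
  define SS where "SS = {|F'| | F'. cofinal_family I F'}"
  have "|I| \<in> SS" unfolding SS_def cofinal_family_def by blast
  then obtain m where "m \<in> SS" and mmin: "\<And>y. (y, m) \<in> ordLess \<Longrightarrow> y \<notin> SS"
    using wfE_min[OF wf_ordLess \<open>|I| \<in> SS\<close>] by blast
  then obtain F where Fc: "cofinal_family I F" and mF: "m = |F|" unfolding SS_def by blast
  have Fmin: "|F| \<le>o |F'|" if "cofinal_family I F'" for F'
  proof -
    have "|F'| \<in> SS" using that unfolding SS_def by blast
    then have "\<not> |F'| <o |F|" using mmin[of "|F'|"] mF by blast
    then show ?thesis using not_ordLess_iff_ordLeq[OF card_of_Well_order card_of_Well_order] by blast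
  qed
  have unc: "\<not> countable F" using ctbl[of F] Fc by auto
  have natless: "|UNIV::nat set| <o |F|"
  proof -
    have "\<not> |F| \<le>o |UNIV::nat set|"
    proof
      assume "|F| \<le>o |UNIV::nat set|"
      then obtain f :: "_ \<Rightarrow> nat" where "inj_on f F" using card_of_ordLeq[of F "UNIV::nat set"] by auto
      then show False using unc countableI[of f F] by simp
    qed
    then show ?thesis using not_ordLeq_iff_ordLess[OF card_of_Well_order[of "UNIV::nat set"] card_of_Well_order[of F]] by simp
  qed
  have infF: "\<not> finite F" using unc countable_finite[of F] by auto
  define r where "r = |F|"
  have WO: "Well_order r" and Fr: "Field r = F" and CO: "Card_order r"
    unfolding r_def using card_of_Well_order[of F] Field_card_of[of F] card_of_Card_order[of F] by auto
  have refl: "(a, a) \<in> r" if "a \<in> F" for a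
    using WO that Fr unfolding well_order_on_def linear_order_on_def partial_order_on_def preorder_on_def refl_on_def by blast
  have trans: "(a, c) \<in> r" if "(a, b) \<in> r" "(b, c) \<in> r" for a b c
    using WO that unfolding well_order_on_def linear_order_on_def partial_order_on_def preorder_on_def trans_def by blast
  have total: "(a, b) \<in> r \<or> (b, a) \<in> r" if "a \<in> F" "b \<in> F" for a b
  proof (cases "a = b")
    case True then show ?thesis using refl that by blast
  next
    case False
    have "total_on F r" using WO Fr unfolding well_order_on_def linear_order_on_def by blast
    then show ?thesis using False that unfolding total_on_def by blast
  qed
  have inF: "a \<in> F" "b \<in> F" if "(a, b) \<in> r" for a b
    using that Fr unfolding Field_def by auto
  define R where "R = r - Id"
  have wfR: "wf R" using WO unfolding R_def well_order_on_def by blast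
  have undR: "underS r a = {b. (b, a) \<in> R}" for a unfolding underS_def R_def by auto
  have maxT: "\<exists>m\<in>T. T \<subseteq> under r m" if "finite T" "T \<noteq> {}" "T \<subseteq> F" for T
    using that
  proof (induction T rule: finite_ne_induct)
    case (singleton x) then show ?case using refl by (auto simp: under_def)
  next
    case (insert a T)
    then obtain m where m: "m \<in> T" "T \<subseteq> under r m" by auto
    show ?case
    proof (cases "(a, m) \<in> r")
      case True then show ?thesis using m by (auto simp: under_def)
    next
      case False
      then have "(m, a) \<in> r" using total[of a m] insert m by auto
      then show ?thesis using m trans refl insert by (auto simp: under_def)
    qed
  qed
  define ch where "ch = (\<lambda>(x :: 'a set \<Rightarrow> 'a) \<alpha>. SOME y. y \<notin> msum (Q.span (x ` underS r \<alpha>)) (Z \<union> \<alpha>))"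
  define x where "x = wfrec R ch"
  have xeq: "x \<alpha> = (SOME y. y \<notin> msum (Q.span (x ` underS r \<alpha>)) (Z \<union> \<alpha>))" for \<alpha>
  proof -
    have "x \<alpha> = ch (cut x R \<alpha>) \<alpha>" unfolding x_def by (rule wfrec[OF wfR])
    moreover have "cut x R \<alpha> ` underS r \<alpha> = x ` underS r \<alpha>" unfolding undR cut_def by auto
    ultimately show ?thesis unfolding ch_def by simp
  qed
  have good: "x \<alpha> \<notin> msum (Q.span (x ` underS r \<alpha>)) (Z \<union> \<alpha>)" if "\<alpha> \<in> F" for \<alpha>
  proof -
    let ?S = "Q.span (x ` underS r \<alpha>)"
    have "\<exists>y. y \<notin> msum ?S (Z \<union> \<alpha>)"
    proof (rule ccontr)
      assume "\<not> ?thesis"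
      then have "msum ?S (Z \<union> \<alpha>) = UNIV" by auto
      moreover have "Z \<union> \<alpha> \<in> I" using un ZI Fc that unfolding cofinal_family_def by blast
      ultimately have "transitive_cover I ?S" unfolding transitive_cover_def by blast
      then obtain F' where "cofinal_family I F'" "|F'| \<le>o |?S|" using cc unfolding cof_le_cov_t_def by blast
      then have FS: "|F| \<le>o |?S|" using ordLeq_transitive[OF Fmin] by blast
      define B where "B = (UNIV::nat set) <+> underS r \<alpha>"
      have "|underS r \<alpha>| <o |F|" using card_of_underS[OF CO, of \<alpha>] Fr that r_def by simp
      then have BF: "|B| <o |F|" unfolding B_def by (rule card_of_Plus_ordLess_infinite[OF infF natless])
      have infB: "\<not> finite B" unfolding B_def by (rule infinite_iff_card_of_nat[THEN iffD2, OF card_of_Plus1])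
      have "|x ` underS r \<alpha>| \<le>o |B|"
        unfolding B_def by (rule ordLeq_transitive[OF card_of_image card_of_Plus2])
      then have "|?S| \<le>o |B|" by (rule card_span[OF infB])
      then have "|F| <o |F|" by (rule ordLeq_ordLess_trans[OF ordLeq_transitive[OF FS] BF])
      then show False using ordLess_irreflexive by blast
    qed
    then show ?thesis unfolding xeq[of \<alpha>] by (rule someI_ex)
  qed
  have qsmul: "qs a (qs b y) = qs (a * b) y" for a b and y :: 'a
    by (simp add: qs_def of_rat_mult)
  have sub_under: "x ` T \<subseteq> x ` under r m" if "T \<subseteq> under r m" for T m
    using that by blast
  have C: "\<beta> \<in> F \<longrightarrow> Q.span (x ` under r \<beta>) \<inter> Z \<subseteq> {0}" for \<beta>
  proof (induction \<beta> rule: wf_induct[OF wfR])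
    case (1 \<beta>)
    show ?case
    proof (intro impI subsetI)
      fix v assume bF: "\<beta> \<in> F" and v: "v \<in> Q.span (x ` under r \<beta>) \<inter> Z"
      show "v \<in> {0}"
      proof (rule ccontr)
        assume v0: "v \<notin> {0}"
        let ?S = "Q.span (x ` underS r \<beta>)"
        have "under r \<beta> = insert \<beta> (underS r \<beta>)" using refl[OF bF] unfolding under_def underS_def by auto
        then have "x ` under r \<beta> = insert (x \<beta>) (x ` underS r \<beta>)" by auto
        then have "v \<in> Q.span (insert (x \<beta>) (x ` underS r \<beta>))" using v by simp
        then obtain k where hk: "v - qs k (x \<beta>) \<in> ?S" unfolding Q.span_insert by blast
        define h where "h = v - qs k (x \<beta>)"
        show False
        proof (cases "k = 0")
          case False
          have "x \<beta> = qs (- 1 / k) h + qs (1 / k) v"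
            using False unfolding h_def by (simp add: qs_def algebra_simps of_rat_divide of_rat_minus)
          moreover have "qs (- 1 / k) h \<in> ?S" using hk unfolding h_def by (rule Q.span_scale)
          moreover have "qs (1 / k) v \<in> Z" using Zs[of "1/k" v] False v by auto
          ultimately have "x \<beta> \<in> msum ?S (Z \<union> \<beta>)" unfolding msum_def by blast
          then show False using good[OF bF] by blast
        next
          case True
          then have "v \<in> ?S" using hk by (simp add: qs_def)
          then obtain T where T: "finite T" "T \<subseteq> x ` underS r \<beta>" "v \<in> Q.span T" using span_fin by blast
          then obtain T' where T': "T' \<subseteq> underS r \<beta>" "finite T'" "T = x ` T'"
            by (meson finite_subset_image)
          have "T' \<noteq> {}" using T T' v0 by auto
          moreover have "T' \<subseteq> F" using T' inF unfolding underS_def by blast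
          ultimately obtain m where m: "m \<in> T'" "T' \<subseteq> under r m" using maxT T' by blast
          have "(m, \<beta>) \<in> R" using m T' undR by blast
          then have IH: "m \<in> F \<longrightarrow> Q.span (x ` under r m) \<inter> Z \<subseteq> {0}" using 1 by blast
          have "m \<in> F" using m \<open>T' \<subseteq> F\<close> by blast
          moreover have "v \<in> Q.span (x ` under r m)"
            using T T' m Q.span_mono[OF sub_under[OF m(2)]] by blast
          ultimately show False using IH v v0 by blast
        qed
      qed
    qed
  qed
  define H where "H = Q.span (x ` F)"
  have "rat_subspace H"
    unfolding rat_subspace_def H_def
  proof (intro conjI ballI)
    show "0 \<in> Q.span (x ` F)" by (rule Q.span_zero)
    show "a + b \<in> Q.span (x ` F)" if "a \<in> Q.span (x ` F)" "b \<in> Q.span (x ` F)" for a b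
      using that by (rule Q.span_add)
    show "q *\<^sub>R a \<in> Q.span (x ` F)" if "q \<in> \<rat>" "a \<in> Q.span (x ` F)" for q a
    proof -
      obtain q' where "q = of_rat q'" using Rats_cases[OF \<open>q \<in> \<rat>\<close>] by metis
      then have "q *\<^sub>R a = qs q' a" by (simp add: qs_def)
      then show ?thesis using Q.span_scale[OF that(2)] by simp
    qed
  qed
  moreover have "H \<notin> I"
  proof
    assume "H \<in> I"
    then obtain \<alpha> where a: "\<alpha> \<in> F" "H \<subseteq> \<alpha>" using Fc unfolding cofinal_family_def by blast
    have "x \<alpha> \<in> H" unfolding H_def using a by (intro Q.span_base) blast
    then have "x \<alpha> \<in> msum (Q.span (x ` underS r \<alpha>)) (Z \<union> \<alpha>)"
    proof -
      have "x \<alpha> = 0 + x \<alpha>" by simp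
      moreover have "x \<alpha> \<in> Z \<union> \<alpha>" using \<open>x \<alpha> \<in> H\<close> a by blast
      ultimately show ?thesis unfolding msum_def using Q.span_zero by blast
    qed
    then show False using good[OF a(1)] by blast
  qed
  moreover have "H \<in> J"
  proof (rule HJ, rule subsetI)
    fix v assume v: "v \<in> H \<inter> Z"
    show "v \<in> {0}"
    proof (rule ccontr)
      assume v0: "v \<notin> {0}"
      obtain T where T: "finite T" "T \<subseteq> x ` F" "v \<in> Q.span T" using span_fin v unfolding H_def by blast
      then obtain T' where T': "T' \<subseteq> F" "finite T'" "T = x ` T'"
        by (meson finite_subset_image)
      have "T' \<noteq> {}" using T T' v0 by auto
      then obtain m where m: "m \<in> T'" "T' \<subseteq> under r m" using maxT T' by blast
      have "v \<in> Q.span (x ` under r m)"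
        using T T' m Q.span_mono[OF sub_under[OF m(2)]] by blast
      then show False using C[of m] m T' v v0 by blast
    qed
  qed
  ultimately show ?thesis by blast
qed


lemma exists_G: "\<exists>G :: (real^'n) set. negligible G \<and> meager (- G)"
proof -
  obtain D :: "(real^'n) set" where D: "countable D" "\<And>X. open X \<Longrightarrow> X \<noteq> {} \<Longrightarrow> \<exists>d\<in>D. d \<in> X"
    by (rule countable_dense_setE) blast
  have Dneg: "negligible D"
  proof -
    have "negligible (\<Union>((\<lambda>d. {d}) ` D))" using D(1) by (intro negligible_countable_Union) auto
    then show ?thesis by simp
  qed
  have "\<exists>U. open U \<and> D \<subseteq> U \<and> (U - D) \<in> lmeasurable \<and> emeasure lebesgue (U - D) < ennreal (1 / Suc m)" for m
  proof -
    have "(0::real) < 1 / Suc m" by simp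
    from sets_lebesgue_outer_open[OF negligible_imp_sets[OF Dneg] this] show ?thesis by metis
  qed
  then obtain U where U: "\<And>m. open (U m)" "\<And>m. D \<subseteq> U m" "\<And>m. (U m - D) \<in> lmeasurable"
      "\<And>m. emeasure lebesgue (U m - D) < ennreal (1 / Suc m)" by metis
  define G where "G = (\<Inter>m. U m)"
  have "negligible (G - D)"
    unfolding negligible_outer
  proof (intro allI impI)
    fix e :: real assume "e > 0"
    then obtain m where m: "inverse (real (Suc m)) < e" using reals_Archimedean by blast
    have "ennreal (measure lebesgue (U m - D)) < ennreal (1 / Suc m)"
      using U(4)[of m] emeasure_eq_measure2[OF U(3)[of m]] by simp
    then have "measure lebesgue (U m - D) < 1 / Suc m" by (simp add: ennreal_less_iff)
    then have "measure lebesgue (U m - D) < e" using m by (simp add: divide_inverse)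
    moreover have "G - D \<subseteq> U m - D" unfolding G_def by blast
    ultimately show "\<exists>T. G - D \<subseteq> T \<and> T \<in> lmeasurable \<and> measure lebesgue T < e" using U(3) by blast
  qed
  then have "negligible G" using Dneg negligible_Un[of "G - D" D] negligible_subset[of "(G - D) \<union> D" G] by blast
  moreover have "meager (- G)"
    unfolding meager_def
  proof (intro exI conjI)
    show "countable (range (\<lambda>m. - U m))" by simp
    show "\<forall>S\<in>range (\<lambda>m. - U m). nowhere_dense S"
    proof
      fix S assume "S \<in> range (\<lambda>m. - U m)"
      then obtain m where S: "S = - U m" by blast
      have cl: "closure S = S" using U(1)[of m] S by (simp add: closed_open)
      have "interior S = {}"
      proof (rule ccontr)
        assume "interior S \<noteq> {}"
        then obtain d where "d \<in> D" "d \<in> interior S" using D(2)[of "interior S"] by blast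
        then show False using interior_subset[of S] S U(2)[of m] by blast
      qed
      then show "nowhere_dense S" unfolding nowhere_dense_def cl .
    qed
    show "- G \<subseteq> \<Union> (range (\<lambda>m. - U m))" unfolding G_def by blast
  qed
  ultimately show ?thesis by blast
qed

lemma null_iff: "A \<in> null_ideal \<longleftrightarrow> negligible A"
  by (simp add: null_ideal_def negligible_iff_null_sets)

lemma null_ctbl:
  fixes F :: "(real^'n) set set"
  assumes "countable F" shows "\<not> cofinal_family null_ideal F"
proof
  assume c: "cofinal_family null_ideal F"
  then have "negligible (\<Union>F)" using assms by (intro negligible_countable_Union) (auto simp: cofinal_family_def null_iff)
  then have "\<Union>F \<noteq> UNIV" using non_negligible_UNIV by metis
  then obtain p where p: "p \<notin> \<Union>F" by blast
  have "{p} \<in> null_ideal" by (simp add: null_iff)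
  then show False using c p unfolding cofinal_family_def by blast
qed

lemma meager_Un: "meager A \<Longrightarrow> meager B \<Longrightarrow> meager (A \<union> B)"
  unfolding meager_def
proof (elim exE conjE)
  fix F1 F2 assume "countable F1" "\<forall>S\<in>F1. nowhere_dense S" "A \<subseteq> \<Union> F1"
    "countable F2" "\<forall>S\<in>F2. nowhere_dense S" "B \<subseteq> \<Union> F2"
  then show "\<exists>F. countable F \<and> (\<forall>S\<in>F. nowhere_dense S) \<and> A \<union> B \<subseteq> \<Union> F"
    by (intro exI[of _ "F1 \<union> F2"]) auto
qed

lemma meager_subset: "meager A \<Longrightarrow> B \<subseteq> A \<Longrightarrow> meager B"
proof -
  assume "meager A" "B \<subseteq> A"
  then obtain F where "countable F" "\<forall>S\<in>F. nowhere_dense S" "A \<subseteq> \<Union>F" unfolding meager_def by blast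
  then show ?thesis unfolding meager_def using \<open>B \<subseteq> A\<close> by (intro exI[of _ F]) simp
qed

lemma meager_Union:
  fixes F :: "'a::topological_space set set"
  assumes "countable F" "\<And>A. A \<in> F \<Longrightarrow> meager A"
  shows "meager (\<Union>F)"
proof -
  define P where "P = (\<lambda>(A::'a set) (G::'a set set). countable G \<and> (\<forall>S\<in>G. nowhere_dense S) \<and> A \<subseteq> \<Union>G)"
  define G where "G = (\<lambda>A. SOME G. P A G)"
  have G: "P A (G A)" if "A \<in> F" for A
  proof -
    have "\<exists>G. P A G" using assms(2)[OF that] unfolding meager_def P_def .
    then show ?thesis unfolding G_def by (rule someI_ex)
  qed
  have c: "countable (\<Union>(G ` F))"
    by (rule countable_UN[OF assms(1)]) (use G in \<open>simp add: P_def\<close>)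
  have n: "\<forall>S\<in>\<Union>(G ` F). nowhere_dense S"
  proof
    fix S assume "S \<in> \<Union>(G ` F)"
    then obtain A where "A \<in> F" "S \<in> G A" by blast
    then show "nowhere_dense S" using G[of A] unfolding P_def by blast
  qed
  have s: "\<Union>F \<subseteq> \<Union>(\<Union>(G ` F))"
  proof
    fix x assume "x \<in> \<Union>F"
    then obtain A where A: "A \<in> F" "x \<in> A" by blast
    then have "x \<in> \<Union>(G A)" using G[of A] unfolding P_def by blast
    then show "x \<in> \<Union>(\<Union>(G ` F))" using A by blast
  qed
  show ?thesis unfolding meager_def using c n s by blast
qed

lemma meager_sing: "meager {p :: real^'n}"
  unfolding meager_def nowhere_dense_def by (intro exI[of _ "{{p}}"]) auto

lemma UNIV_not_meager: "\<not> meager (UNIV :: (real^'n) set)"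
proof
  assume "meager (UNIV :: (real^'n) set)"
  then obtain F :: "(real^'n) set set" where F: "countable F" "\<forall>S\<in>F. nowhere_dense S" "UNIV \<subseteq> \<Union>F"
    unfolding meager_def by blast
  define \<G> where "\<G> = (\<lambda>S. - closure S) ` F"
  have "UNIV \<subseteq> closure (\<Inter>\<G>)"
  proof (rule Baire)
    show "closed (UNIV :: (real^'n) set)" by simp
    show "countable \<G>" unfolding \<G>_def using F(1) by simp
    fix T assume "T \<in> \<G>"
    then obtain S where S: "S \<in> F" "T = - closure S" unfolding \<G>_def by blast
    have "closure T = UNIV" using S F(2) by (simp add: closure_complement nowhere_dense_def)
    then show "openin (top_of_set UNIV) T \<and> UNIV \<subseteq> closure T" using S by auto
  qed
  then have "\<Inter>\<G> \<noteq> {}" by auto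
  then obtain p where "p \<in> \<Inter>\<G>" by blast
  then have "\<forall>S\<in>F. p \<notin> closure S" unfolding \<G>_def by blast
  then have "p \<notin> \<Union>F" using closure_subset by blast
  then show False using F(3) by blast
qed

lemma meager_ctbl:
  fixes F :: "(real^'n) set set"
  assumes "countable F" shows "\<not> cofinal_family meager_ideal F"
proof
  assume c: "cofinal_family meager_ideal F"
  then have "meager (\<Union>F)" using assms by (intro meager_Union) (auto simp: cofinal_family_def meager_ideal_def)
  then have "\<Union>F \<noteq> UNIV" using UNIV_not_meager by metis
  then obtain p where p: "p \<notin> \<Union>F" by blast
  have "{p} \<in> meager_ideal" by (simp add: meager_ideal_def meager_sing)
  then show False using c p unfolding cofinal_family_def by blast
qed

lemma scale_negligible:
  fixes S :: "(real^'n) set"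
  assumes "negligible S" shows "negligible ((\<lambda>z. qs q z) ` S)"
  unfolding qs_def
  by (rule negligible_differentiable_image_negligible[OF order_refl assms]) (auto intro!: derivative_intros simp: differentiable_on_def differentiable_def)

lemma scale_meager:
  fixes S :: "(real^'n) set"
  assumes "meager S" "q \<noteq> 0" shows "meager ((\<lambda>z. qs q z) ` S)"
proof -
  let ?f = "(*\<^sub>R) (real_of_rat q) :: real^'n \<Rightarrow> real^'n"
  have lin: "linear ?f" by (rule bounded_linear.linear[OF bounded_linear_scaleR_right])
  have inj: "inj ?f" using assms(2) by (auto simp: inj_on_def)
  have nd: "nowhere_dense (?f ` N)" if "nowhere_dense N" for N
  proof -
    have "interior (closure (?f ` N)) = ?f ` interior (closure N)"
      by (simp add: closure_scaleR[symmetric] interior_injective_linear_image[OF lin inj])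
    then show ?thesis using that unfolding nowhere_dense_def by simp
  qed
  obtain F where F: "countable F" "\<forall>S\<in>F. nowhere_dense S" "S \<subseteq> \<Union>F" using assms(1) unfolding meager_def by blast
  show ?thesis unfolding meager_def qs_def
  proof (intro exI[of _ "(\<lambda>N. ?f ` N) ` F"] conjI)
    show "countable ((\<lambda>N. ?f ` N) ` F)" using F(1) by simp
    show "\<forall>S\<in>(\<lambda>N. ?f ` N) ` F. nowhere_dense S" using F(2) nd by blast
    show "(\<lambda>z. real_of_rat q *\<^sub>R z) ` S \<subseteq> \<Union> ((\<lambda>N. ?f ` N) ` F)" using F(3) by blast
  qed
qed

lemma qs_qs: "qs a (qs b y) = qs (a * b) y"
  by (simp add: qs_def of_rat_mult)

lemma qs_one: "qs 1 y = y" by (simp add: qs_def)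

theorem theorem2p5:
  fixes I J :: "(real ^ 'n) set set"
  assumes "(I = null_ideal \<and> J = meager_ideal) \<or> (I = meager_ideal \<and> J = null_ideal)"
    and "cof_le_cov_t I"
  shows "\<exists>H :: (real ^ 'n) set. rat_subspace H \<and> H \<in> J \<and> H \<notin> I"
proof -
  obtain G :: "(real ^ 'n) set" where G: "negligible G" "meager (- G)" using exists_G by blast
  from assms(1) show ?thesis
  proof
    assume IJ: "I = null_ideal \<and> J = meager_ideal"
    define Z where "Z = (\<Union>q\<in>-{0}. (\<lambda>z. qs q z) ` G)"
    have GZ: "G \<subseteq> Z"
    proof
      fix g assume g: "g \<in> G"
      have "qs 1 g \<in> (\<lambda>z. qs 1 z) ` G" using g by (rule imageI)
      moreover have "(1::rat) \<in> - {0}" by simp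
      ultimately have "qs 1 g \<in> Z" unfolding Z_def by (rule UN_I[rotated])
      then show "g \<in> Z" by (simp add: qs_one)
    qed
    show ?thesis
    proof (rule abstract[where Z=Z])
      show "A \<union> B \<in> I" if "A \<in> I" "B \<in> I" for A B
        using that IJ by (simp add: null_iff negligible_Un)
      show "\<not> cofinal_family I F" if "countable F" for F
        using IJ null_ctbl[OF that] by simp
      show "Z \<in> I" unfolding IJ[THEN conjunct1] null_iff Z_def
        by (intro negligible_countable_Union) (auto intro: scale_negligible[OF G(1)])
      show "qs q z \<in> Z" if q0: "q \<noteq> 0" and zZ: "z \<in> Z" for q z
      proof -
        obtain p g where pg: "p \<in> - {0}" "g \<in> G" "z = qs p g" using zZ unfolding Z_def by blast
        have "qs q z = qs (q * p) g" using pg by (simp add: qs_qs)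
        moreover have "q * p \<in> - {0}" using pg q0 by simp
        ultimately show ?thesis unfolding Z_def using pg(2) by blast
      qed
      show "H \<in> J" if "H \<inter> Z \<subseteq> {0}" for H
      proof -
        have "H \<subseteq> (- G) \<union> {0}" using that GZ by blast
        moreover have "meager ((- G) \<union> {0})" using G(2) meager_sing meager_Un by blast
        ultimately show ?thesis using IJ meager_subset by (simp add: meager_ideal_def)
      qed
      show "cof_le_cov_t I" by (rule assms(2))
    qed
  next
    assume IJ: "I = meager_ideal \<and> J = null_ideal"
    define Z where "Z = (\<Union>q\<in>-{0}. (\<lambda>z. qs q z) ` (- G))"
    have GZ: "- G \<subseteq> Z"
    proof
      fix g assume g: "g \<in> (- G)"
      have "qs 1 g \<in> (\<lambda>z. qs 1 z) ` (- G)" using g by (rule imageI)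
      moreover have "(1::rat) \<in> - {0}" by simp
      ultimately have "qs 1 g \<in> Z" unfolding Z_def by (rule UN_I[rotated])
      then show "g \<in> Z" by (simp add: qs_one)
    qed
    show ?thesis
    proof (rule abstract[where Z=Z])
      show "A \<union> B \<in> I" if "A \<in> I" "B \<in> I" for A B
        using that IJ by (simp add: meager_ideal_def meager_Un)
      show "\<not> cofinal_family I F" if "countable F" for F
        using IJ meager_ctbl[OF that] by simp
      show "Z \<in> I" unfolding IJ[THEN conjunct1] meager_ideal_def Z_def
        by (simp, intro meager_Union) (auto intro: scale_meager[OF G(2)])
      show "qs q z \<in> Z" if q0: "q \<noteq> 0" and zZ: "z \<in> Z" for q z
      proof -
        obtain p g where pg: "p \<in> - {0}" "g \<in> (- G)" "z = qs p g" using zZ unfolding Z_def by blast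
        have "qs q z = qs (q * p) g" using pg by (simp add: qs_qs)
        moreover have "q * p \<in> - {0}" using pg q0 by simp
        ultimately show ?thesis unfolding Z_def using pg(2) by blast
      qed
      show "H \<in> J" if "H \<inter> Z \<subseteq> {0}" for H
      proof -
        have "H \<subseteq> G \<union> {0}" using that GZ by blast
        moreover have "negligible (G \<union> {0})" using G(1) by (simp add: negligible_Un)
        ultimately have "negligible H" using negligible_subset by blast
        then show ?thesis using IJ by (simp add: null_iff)
      qed
      show "cof_le_cov_t I" by (rule assms(2))
    qed
  qed
qed

end
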